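(* Let $\varphi:S^1\to S^1$ be a minimal orientation preserving circle homeomorphism with lift $\Phi$, and for $x_0\in\mathbb{R}$ let $\Gamma(x_0)$ be the curlicue generated by the orbit $u_n=\Phi^n(x_0)$. Then either $\Gamma(x_0)$ is bounded for every $x_0$, or $\Gamma(x_0)$ is unbounded for every $x_0$. Moreover, in the bounded case there is a closed curve $\tau=u(S^1)$, where $u:S^1\to\mathbb{C}$ is a continuous function, whose shape does not depend on $x_0$, such that for every $x_0$ the vertices of $\Gamma(x_0)$ lie on the translate $\tau-u(x_0)$ of $\tau$.
   Context: Identify $S^1=\mathbb{R}/\mathbb{Z}$ via $x\mapsto\exp(2\pi\imath x)$; a lift of $\varphi$ is a homeomorphism $\Phi:\mathbb{R}\to\mathbb{R}$ with $\Phi(x+1)=\Phi(x)+1$ projecting to $\varphi$. For a real sequence $u=(u_n)_{n\ge0}$, the curlicue is the piecewise linear curve in $\mathbb{C}$ passing consecutively through $z_0=0$ and $z_n=\sum_{k=0}^{n-1}\exp(2\pi\imath u_k)$, $n\ge1$; these $z_n$ are its vertices. A curve is bounded if it has finite diameter. *)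

theory Defs
  imports "HOL-Analysis.Analysis"
begin

definition circ :: "real \<Rightarrow> complex" where
  "circ x = exp (2 * pi * \<i> * complex_of_real x)"

definition circle_homeo :: "(complex \<Rightarrow> complex) \<Rightarrow> bool" where
  "circle_homeo \<phi> \<longleftrightarrow> (\<exists>\<psi>. homeomorphism (sphere 0 1) (sphere 0 1) \<phi> \<psi>)"

definition is_lift :: "(complex \<Rightarrow> complex) \<Rightarrow> (real \<Rightarrow> real) \<Rightarrow> bool" where
  "is_lift \<phi> \<Phi> \<longleftrightarrow> (\<exists>\<Psi>. homeomorphism UNIV UNIV \<Phi> \<Psi>) \<and>
     (\<forall>x. \<Phi> (x + 1) = \<Phi> x + 1) \<and> (\<forall>x. \<phi> (circ x) = circ (\<Phi> x))"

text \<open>Orientation preserving: (some, equivalently every) lift is increasing.\<close>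
definition orientation_preserving :: "(complex \<Rightarrow> complex) \<Rightarrow> bool" where
  "orientation_preserving \<phi> \<longleftrightarrow> (\<exists>\<Phi>. is_lift \<phi> \<Phi> \<and> strict_mono \<Phi>)"

definition minimal_circle :: "(complex \<Rightarrow> complex) \<Rightarrow> bool" where
  "minimal_circle \<phi> \<longleftrightarrow>
     (\<forall>z\<in>sphere 0 1. closure {(\<phi> ^^ n) z | n. True} = sphere 0 1)"

definition curlicue_vertex :: "(nat \<Rightarrow> real) \<Rightarrow> nat \<Rightarrow> complex" where
  "curlicue_vertex u n = (\<Sum>k<n. exp (2 * pi * \<i> * complex_of_real (u k)))"

definition curlicue :: "(nat \<Rightarrow> real) \<Rightarrow> complex set" where
  "curlicue u = (\<Union>n. closed_segment (curlicue_vertex u n) (curlicue_vertex u (Suc n)))"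

end

theory Submission
  imports Defs
begin

lemma minimal_exists:
  fixes F :: "'a::heine_borel \<Rightarrow> 'a"
  assumes "compact K" "K \<noteq> {}" "F ` K \<subseteq> K"
  defines "A \<equiv> {S. S \<subseteq> K \<and> S \<noteq> {} \<and> closed S \<and> F ` S \<subseteq> S}"
  shows "\<exists>M\<in>A. \<forall>S\<in>A. S \<subseteq> M \<longrightarrow> S = M"
proof -
  have po: "partial_order_on A (relation_of (\<lambda>a b. b \<subseteq> a) A)"
    unfolding partial_order_on_def preorder_on_def refl_on_def trans_def antisym_def relation_of_def
    by auto
  have "\<exists>m \<in> A. \<forall>a \<in> A. (\<lambda>a b. b \<subseteq> a) m a \<longrightarrow> a = m"
  proof (rule predicate_Zorn[OF po])
    fix C assume C: "C \<in> Chains (relation_of (\<lambda>a b. b \<subseteq> a) A)"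
    then have CA: "C \<subseteq> A" by (rule Chains_relation_of)
    show "\<exists>u\<in>A. \<forall>a\<in>C. a \<supseteq> u"
    proof (cases "C = {}")
      case True
      then show ?thesis using assms compact_imp_closed unfolding A_def by auto
    next
      case False
      have ch: "\<And>S T. S \<in> C \<and> T \<in> C \<Longrightarrow> S \<subseteq> T \<or> T \<subseteq> S"
        using C unfolding Chains_def relation_of_def by blast
      have cpt: "compact S" if "S \<in> C" for S
      proof -
        have "S \<in> A" using CA that by blast
        hence "S \<subseteq> K" "closed S" by (auto simp: A_def)
        then show ?thesis by (metis compact_Int_closed[OF assms(1)] inf.absorb2)
      qed
      have "\<Inter>C \<noteq> {}"
        by (rule compact_chain[OF cpt]) (use CA ch in \<open>auto simp: A_def\<close>)
      moreover have "\<Inter>C \<subseteq> K" using False CA unfolding A_def by blast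
      moreover have "closed (\<Inter>C)" using CA unfolding A_def by auto
      moreover have "F ` \<Inter>C \<subseteq> \<Inter>C" using CA unfolding A_def by blast
      ultimately have "\<Inter>C \<in> A" unfolding A_def by blast
      then show ?thesis by blast
    qed
  qed
  then show ?thesis by blast
qed

lemma GH:
  fixes X :: "complex set" and T :: "complex \<Rightarrow> complex" and f :: "complex \<Rightarrow> complex"
  assumes X: "compact X" and Tc: "continuous_on X T" and TX: "T ` X \<subseteq> X"
    and minim: "\<And>z. z \<in> X \<Longrightarrow> X \<subseteq> closure (range (\<lambda>n. (T ^^ n) z))"
    and fc: "continuous_on X f"
    and x0: "x0 \<in> X" and bnd: "\<And>n. norm (\<Sum>k<n. f ((T^^k) x0)) \<le> B"
  shows "\<exists>g. continuous_on X g \<and> (\<forall>x\<in>X. g (T x) = g x + f x)"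
proof -
  define S where "S n = (\<Sum>k<n. f ((T^^k) x0))" for n
  define F where "F p = (T (fst p), snd p + f (fst p))" for p :: "complex \<times> complex"
  define Orb where "Orb = range (\<lambda>n. ((T^^n) x0, S n))"
  define K where "K = closure Orb"
  have orbX: "(T^^n) x0 \<in> X" for n
    by (induction n) (use x0 TX in auto)
  have OXB: "Orb \<subseteq> X \<times> cball (0::complex) B"
    using orbX bnd unfolding Orb_def S_def by (auto simp: mem_cball_0)
  have cXB: "compact (X \<times> cball (0::complex) B)" by (intro compact_Times X compact_cball)
  have KXB: "K \<subseteq> X \<times> cball (0::complex) B"
    unfolding K_def using closure_minimal[OF OXB compact_imp_closed[OF cXB]] .
  have Kc: "compact K"
    unfolding K_def compact_closure using bounded_subset[OF compact_imp_bounded[OF cXB] OXB] .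
  have Kne: "K \<noteq> {}" unfolding K_def Orb_def by auto
  have c1: "continuous_on (X \<times> UNIV) (\<lambda>p. T (fst p))"
    by (rule continuous_on_compose2[OF Tc continuous_on_fst[OF continuous_on_id]]) auto
  have c2: "continuous_on (X \<times> UNIV) (\<lambda>p. f (fst p))"
    by (rule continuous_on_compose2[OF fc continuous_on_fst[OF continuous_on_id]]) auto
  have Fcont: "continuous_on (X \<times> UNIV) F"
    unfolding F_def by (intro continuous_on_Pair c1 continuous_on_add continuous_on_snd c2 continuous_on_id)
  have FO: "F ` Orb \<subseteq> Orb"
  proof
    fix q assume "q \<in> F ` Orb"
    then obtain n where "q = F ((T^^n) x0, S n)" unfolding Orb_def by auto
    then have "q = ((T^^Suc n) x0, S (Suc n))" unfolding F_def S_def by simp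
    then show "q \<in> Orb" unfolding Orb_def by blast
  qed
  have FK: "F ` K \<subseteq> K"
  proof -
    have sub: "closure Orb \<subseteq> X \<times> UNIV" using KXB unfolding K_def by blast
    have "F ` Orb \<subseteq> closure Orb" using FO closure_subset by blast
    then show ?thesis unfolding K_def
      by (rule image_closure_subset[OF continuous_on_subset[OF Fcont sub] closed_closure])
  qed
  from minimal_exists[OF Kc Kne FK] obtain M
    where M1: "M \<in> {S. S \<subseteq> K \<and> S \<noteq> {} \<and> closed S \<and> F ` S \<subseteq> S}"
      and M2: "\<forall>S\<in>{S. S \<subseteq> K \<and> S \<noteq> {} \<and> closed S \<and> F ` S \<subseteq> S}. S \<subseteq> M \<longrightarrow> S = M" ..
  have MA: "M \<subseteq> K" "M \<noteq> {}" "closed M" "F ` M \<subseteq> M" using M1 by simp_all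
  have Mmin: "S' = M" if "S' \<subseteq> K" "S' \<noteq> {}" "closed S'" "F ` S' \<subseteq> S'" "S' \<subseteq> M" for S'
  proof -
    have "S' \<in> {S. S \<subseteq> K \<and> S \<noteq> {} \<and> closed S \<and> F ` S \<subseteq> S}" using that by simp
    from M2[rule_format, OF this that(5)] show ?thesis .
  qed
  have Mc: "compact M"
  proof -
    have "K \<inter> M = M" using MA(1) by blast
    with compact_Int_closed[OF Kc MA(3)] show ?thesis by simp
  qed
  have MXB: "M \<subseteq> X \<times> cball (0::complex) B" using MA(1) KXB by blast
  have Fiter: "p \<in> M \<Longrightarrow> (F^^n) p \<in> M" for p n
    by (induction n) (use MA(4) in auto)
  have Fst: "fst ((F^^n) p) = (T^^n) (fst p)" for p n
    by (induction n) (auto simp: F_def)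
  have proj: "fst ` M = X"
  proof
    show "fst ` M \<subseteq> X" using MXB by auto
    obtain p where p: "p \<in> M" using MA(2) by blast
    have pX: "fst p \<in> X" using p MXB by auto
    have "range (\<lambda>n. (T^^n) (fst p)) \<subseteq> fst ` M"
      using Fiter[OF p] Fst by (metis (no_types, lifting) image_eqI image_subsetI rangeE)
    moreover have "closed (fst ` M)"
      by (intro compact_imp_closed compact_continuous_image continuous_on_fst continuous_on_id Mc)
    ultimately have "closure (range (\<lambda>n. (T^^n) (fst p))) \<subseteq> fst ` M"
      by (rule closure_minimal)
    then show "X \<subseteq> fst ` M" using minim[OF pX] by blast
  qed
  have uniq: "v = w" if xv: "(x,v) \<in> M" and xw: "(x,w) \<in> M" for x v w
  proof (rule ccontr)
    assume ne: "v \<noteq> w"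
    define c where "c = w - v"
    have cne: "c \<noteq> 0" using ne by (simp add: c_def)
    define sh where "sh p = (fst p, snd p + c)" for p :: "complex \<times> complex"
    have shc: "continuous_on M sh" unfolding sh_def by (intro continuous_intros)
    have M'c: "closed (sh ` M)"
      by (intro compact_imp_closed compact_continuous_image shc Mc)
    have Fsh: "F (sh p) = sh (F p)" for p by (simp add: F_def sh_def algebra_simps)
    have "(x, w) \<in> sh ` M" using xv unfolding sh_def c_def by (auto intro!: image_eqI[where x="(x,v)"])
    then have ne2: "M \<inter> sh ` M \<noteq> {}" using xw by blast
    have inv2: "F ` (M \<inter> sh ` M) \<subseteq> M \<inter> sh ` M"
    proof
      fix q assume "q \<in> F ` (M \<inter> sh ` M)"
      then obtain p where p: "p \<in> M" "sh p \<in> M" "q = F (sh p)" by auto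
      then have "q = sh (F p)" using Fsh by simp
      then show "q \<in> M \<inter> sh ` M" using p MA(4) by auto
    qed
    have "M \<inter> sh ` M = M"
    proof (rule Mmin)
      show "M \<inter> sh ` M \<subseteq> K" using MA(1) by blast
      show "M \<inter> sh ` M \<noteq> {}" by (rule ne2)
      show "closed (M \<inter> sh ` M)" using MA(3) M'c by (rule closed_Int)
      show "F ` (M \<inter> sh ` M) \<subseteq> M \<inter> sh ` M" by (rule inv2)
      show "M \<inter> sh ` M \<subseteq> M" by blast
    qed
    then have sub: "M \<subseteq> sh ` M" by blast
    have down: "(y, s - c) \<in> M" if ys: "(y, s) \<in> M" for y s
    proof -
      obtain q where q: "q \<in> M" "(y, s) = sh q" using sub ys by blast
      then have "q = (y, s - c)" unfolding sh_def by (cases q) auto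
      then show ?thesis using q by simp
    qed
    have it: "(x, v - of_nat k * c) \<in> M" for k
    proof (induction k)
      case 0 then show ?case using xv by simp
    next
      case (Suc k)
      from down[OF Suc] show ?case by (simp add: algebra_simps)
    qed
    have bk: "norm (v - of_nat k * c) \<le> B" for k using it[of k] MXB by (auto simp: mem_cball_0)
    obtain k :: nat where k: "(norm v + B) / norm c < real k" using reals_Archimedean2 by blast
    have "norm v + B < real k * norm c" using k cne by (simp add: field_simps)
    also have "real k * norm c = norm (of_nat k * c)" by (simp add: norm_mult)
    also have "\<dots> \<le> norm v + norm (v - of_nat k * c)" using norm_triangle_ineq4[of v "v - of_nat k * c"] by simp
    also have "\<dots> \<le> norm v + B" using bk[of k] by simp
    finally show False by simp
  qed
  define g where "g x = (SOME v. (x, v) \<in> M)" for x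
  have gM: "(x, g x) \<in> M" if xX: "x \<in> X" for x
  proof -
    obtain v where "(x, v) \<in> M" using xX proj by force
    then show ?thesis unfolding g_def by (rule someI)
  qed
  have Mg: "snd p = g (fst p)" if "p \<in> M" for p
  proof -
    have "fst p \<in> X" using that MXB by auto
    then show ?thesis using uniq[of "fst p" "snd p" "g (fst p)"] gM that by simp
  qed
  have ginv: "g (T x) = g x + f x" if "x \<in> X" for x
  proof -
    have "F (x, g x) \<in> M" using gM[OF that] MA(4) by blast
    then show ?thesis using Mg unfolding F_def by fastforce
  qed
  have gcont: "continuous_on X g"
  proof (subst continuous_on_closed_vimage[OF compact_imp_closed[OF X]], intro allI impI)
    fix C :: "complex set" assume C: "closed C"
    have eq: "g -` C \<inter> X = fst ` (M \<inter> (UNIV \<times> C))"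
    proof
      show "g -` C \<inter> X \<subseteq> fst ` (M \<inter> (UNIV \<times> C))"
        using gM by (force intro: image_eqI)
      show "fst ` (M \<inter> (UNIV \<times> C)) \<subseteq> g -` C \<inter> X"
        using Mg MXB by force
    qed
    have "compact (M \<inter> (UNIV \<times> C))"
      by (intro compact_Int_closed Mc closed_Times closed_UNIV C)
    then show "closed (g -` C \<inter> X)" unfolding eq
      by (intro compact_imp_closed compact_continuous_image continuous_on_fst continuous_on_id)
  qed
  show ?thesis using gcont ginv by blast
qed


lemma vertices_bounded_iff:
  "bounded (curlicue u) \<longleftrightarrow> (\<exists>B. \<forall>n. norm (curlicue_vertex u n) \<le> B)"
proof
  assume "bounded (curlicue u)"
  then obtain B where B: "\<And>z. z \<in> curlicue u \<Longrightarrow> norm z \<le> B" by (meson bounded_iff)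
  have "curlicue_vertex u n \<in> curlicue u" for n
    unfolding curlicue_def using ends_in_segment(1) by blast
  then show "\<exists>B. \<forall>n. norm (curlicue_vertex u n) \<le> B" using B by blast
next
  assume "\<exists>B. \<forall>n. norm (curlicue_vertex u n) \<le> B"
  then obtain B where B: "\<And>n. curlicue_vertex u n \<in> cball 0 B" by (auto simp: mem_cball_0)
  have "closed_segment (curlicue_vertex u n) (curlicue_vertex u (Suc n)) \<subseteq> cball 0 B" for n
    by (rule closed_segment_subset[OF B B convex_cball])
  then have "curlicue u \<subseteq> cball 0 B" unfolding curlicue_def by blast
  then show "bounded (curlicue u)" using bounded_cball bounded_subset by blast
qed

lemma norm_circ: "norm (circ x) = 1"
  unfolding circ_def by (simp add: norm_exp_eq_Re)

theorem corollary3p6: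
  fixes \<phi> :: "complex \<Rightarrow> complex" and \<Phi> :: "real \<Rightarrow> real"
  assumes "circle_homeo \<phi>"
    and "orientation_preserving \<phi>"
    and "minimal_circle \<phi>"
    and "is_lift \<phi> \<Phi>"
  shows "((\<forall>x0. bounded (curlicue (\<lambda>n. (\<Phi> ^^ n) x0))) \<or>
          (\<forall>x0. \<not> bounded (curlicue (\<lambda>n. (\<Phi> ^^ n) x0))))
       \<and> ((\<forall>x0. bounded (curlicue (\<lambda>n. (\<Phi> ^^ n) x0))) \<longrightarrow>
          (\<exists>u :: complex \<Rightarrow> complex. continuous_on (sphere 0 1) u \<and>
             (\<forall>x0 n. curlicue_vertex (\<lambda>k. (\<Phi> ^^ k) x0) n
                \<in> (\<lambda>w. w - u (circ x0)) ` (u ` sphere 0 1))))"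
proof -
  let ?X = "sphere (0::complex) 1"
  obtain \<psi> where hom: "homeomorphism ?X ?X \<phi> \<psi>"
    using assms(1) unfolding circle_homeo_def by blast
  have phic: "continuous_on ?X \<phi>" and phiX: "\<phi> ` ?X \<subseteq> ?X"
    using hom unfolding homeomorphism_def by auto
  have minim: "?X \<subseteq> closure (range (\<lambda>n. (\<phi> ^^ n) z))" if "z \<in> ?X" for z
  proof -
    have eq: "{(\<phi> ^^ n) z | n. True} = range (\<lambda>n. (\<phi> ^^ n) z)" by auto
    have "closure {(\<phi> ^^ n) z | n. True} = ?X"
      using assms(3) that unfolding minimal_circle_def by blast
    then show ?thesis unfolding eq by simp
  qed
  have lift: "\<And>x. \<phi> (circ x) = circ (\<Phi> x)"
    using assms(4) unfolding is_lift_def by blast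
  have orb: "(\<phi> ^^ n) (circ x0) = circ ((\<Phi> ^^ n) x0)" for n x0
    by (induction n) (simp_all add: lift)
  have circX: "circ x \<in> ?X" for x by (simp add: norm_circ)
  have iterX: "(\<phi> ^^ n) z \<in> ?X" if "z \<in> ?X" for n z
  proof (induction n)
    case 0 then show ?case using that by simp
  next
    case (Suc n) then show ?case using phiX by (simp add: image_subset_iff)
  qed
  have vert: "curlicue_vertex (\<lambda>k. (\<Phi> ^^ k) x0) n = (\<Sum>k<n. (\<phi> ^^ k) (circ x0))" for x0 n
    unfolding curlicue_vertex_def orb by (simp add: circ_def)
  have key: "\<exists>g. continuous_on ?X g \<and> (\<forall>x\<in>?X. g (\<phi> x) = g x + x)"
    if bd: "bounded (curlicue (\<lambda>n. (\<Phi> ^^ n) x0))" for x0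
  proof -
    obtain B where B: "\<And>n. norm (curlicue_vertex (\<lambda>k. (\<Phi> ^^ k) x0) n) \<le> B"
      using bd unfolding vertices_bounded_iff by blast
    show ?thesis
      by (rule GH[OF compact_sphere phic phiX minim continuous_on_id circX[of x0], where B=B])
         (use B vert in simp_all)
  qed
  have tel: "(\<Sum>k<n. (\<phi> ^^ k) z) = g ((\<phi> ^^ n) z) - g z"
    if g: "\<forall>x\<in>?X. g (\<phi> x) = g x + x" and z: "z \<in> ?X" for g z n
  proof (induction n)
    case 0 then show ?case by simp
  next
    case (Suc n)
    have "g ((\<phi> ^^ Suc n) z) = g ((\<phi> ^^ n) z) + (\<phi> ^^ n) z"
      using g iterX[OF z, of n] by simp
    then show ?case using Suc by simp
  qed
  have allb: "\<forall>x0. bounded (curlicue (\<lambda>n. (\<Phi> ^^ n) x0))"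
    if g: "continuous_on ?X g" "\<forall>x\<in>?X. g (\<phi> x) = g x + x" for g
  proof
    fix x0
    obtain C where C: "\<And>z. z \<in> g ` ?X \<Longrightarrow> norm z \<le> C"
      using compact_imp_bounded[OF compact_continuous_image[OF g(1) compact_sphere]]
      by (meson bounded_iff)
    have "norm (curlicue_vertex (\<lambda>k. (\<Phi> ^^ k) x0) n) \<le> C + C" for n
    proof -
      have "curlicue_vertex (\<lambda>k. (\<Phi> ^^ k) x0) n = g ((\<phi> ^^ n) (circ x0)) - g (circ x0)"
        using vert tel[OF g(2) circX] by simp
      also have "norm \<dots> \<le> norm (g ((\<phi> ^^ n) (circ x0))) + norm (g (circ x0))"
        by (rule norm_triangle_ineq4)
      also have "\<dots> \<le> C + C"
        using C iterX[OF circX] circX by (meson add_mono image_eqI)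
      finally show ?thesis .
    qed
    then show "bounded (curlicue (\<lambda>n. (\<Phi> ^^ n) x0))"
      unfolding vertices_bounded_iff by blast
  qed
  have part1: "(\<forall>x0. bounded (curlicue (\<lambda>n. (\<Phi> ^^ n) x0))) \<or>
          (\<forall>x0. \<not> bounded (curlicue (\<lambda>n. (\<Phi> ^^ n) x0)))"
  proof (cases "\<exists>x0. bounded (curlicue (\<lambda>n. (\<Phi> ^^ n) x0))")
    case True
    then obtain x0 where "bounded (curlicue (\<lambda>n. (\<Phi> ^^ n) x0))" by blast
    from key[OF this] obtain g where "continuous_on ?X g" "\<forall>x\<in>?X. g (\<phi> x) = g x + x" by blast
    then show ?thesis using allb by blast
  next
    case False
    then show ?thesis by blast
  qed
  have part2: "\<exists>u :: complex \<Rightarrow> complex. continuous_on (sphere 0 1) u \<and>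
             (\<forall>x0 n. curlicue_vertex (\<lambda>k. (\<Phi> ^^ k) x0) n
                \<in> (\<lambda>w. w - u (circ x0)) ` (u ` sphere 0 1))"
    if "\<forall>x0. bounded (curlicue (\<lambda>n. (\<Phi> ^^ n) x0))"
  proof -
    from key[of 0] that obtain g where g: "continuous_on ?X g" "\<forall>x\<in>?X. g (\<phi> x) = g x + x" by blast
    have "curlicue_vertex (\<lambda>k. (\<Phi> ^^ k) x0) n \<in> (\<lambda>w. w - g (circ x0)) ` (g ` ?X)" for x0 n
    proof -
      have "curlicue_vertex (\<lambda>k. (\<Phi> ^^ k) x0) n = g ((\<phi> ^^ n) (circ x0)) - g (circ x0)"
        using vert tel[OF g(2) circX] by simp
      then show ?thesis using iterX[OF circX] by blast
    qed
    then show ?thesis using g(1) by blast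
  qed
  show ?thesis using part1 part2 by blast
qed

end
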